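(* Let $\Sigma_N(z):=\left(\int_0^{z} h^N(x)^2\,\tilde h^N(x)\,dx\right)^{1/2}$ for $z\in[0,L_N]$, and let $A_N:=6\log\log N-\log\log\log N$. There exist constants $\sigma>0$ and $a>0$, depending only on $c$, such that, as $N\to\infty$, $$\frac{1}{N^{c}}\Sigma_N(L_N)^2\to\sigma^2,\qquad \frac{1}{N^{c}}\Sigma_N(A_N)^2\to\sigma^2,\qquad \frac{1}{N^{1-c}}\int_0^{A_N}N\,\tilde h^N(x)\,dx\to a .$$
   Context: Fix $c\in(0,1)$. For $\beta\in(0,1)$ put $\gamma_\beta=\sqrt{1-\beta^2}$ and $L_\beta=\gamma_\beta^{-1}\big(\pi-\arctan(\gamma_\beta/\beta)\big)$; the map $\beta\mapsto L_\beta$ is an increasing bijection from $(0,1)$ onto $(\pi/2,\infty)$. For every integer $N$ large enough that $c\log N+6\log\log N>\pi/2$, let $\beta_N\in(0,1)$ be defined by $L_{\beta_N}=c\log N+6\log\log N$, and write $L_N=L_{\beta_N}$, $\gamma_N=\gamma_{\beta_N}$, $\Omega_N=[0,L_N]$. Define, for $x\in\Omega_N$, $\tilde h^N(x)=\gamma_N^{-1}e^{\beta_N(x-L_N)}\sin(\gamma_N(L_N-x))$ and $h^N(x)=\frac{2\gamma_N}{L_N+\beta_N}e^{\beta_N(L_N-x)}\sin(\gamma_N(L_N-x))$. *)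

theory Defs
  imports "HOL-Analysis.Analysis"
begin

definition gam :: "real \<Rightarrow> real" where
  "gam b = sqrt (1 - b\<^sup>2)"

definition Lb :: "real \<Rightarrow> real" where
  "Lb b = (pi - arctan (gam b / b)) / gam b"

definition Ltarget :: "real \<Rightarrow> nat \<Rightarrow> real" where
  "Ltarget c N = c * ln (real N) + 6 * ln (ln (real N))"

text \<open>beta_N: the unique beta in (0,1) with L_beta = c log N + 6 log log N
  (meaningful for N large enough; unspecified otherwise).\<close>
definition betaN :: "real \<Rightarrow> nat \<Rightarrow> real" where
  "betaN c N = (THE b. 0 < b \<and> b < 1 \<and> Lb b = Ltarget c N)"

definition LN :: "real \<Rightarrow> nat \<Rightarrow> real" where
  "LN c N = Lb (betaN c N)"

definition gamN :: "real \<Rightarrow> nat \<Rightarrow> real" where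
  "gamN c N = gam (betaN c N)"

definition htilde :: "real \<Rightarrow> nat \<Rightarrow> real \<Rightarrow> real" where
  "htilde c N x = exp (betaN c N * (x - LN c N)) * sin (gamN c N * (LN c N - x)) / gamN c N"

definition hN :: "real \<Rightarrow> nat \<Rightarrow> real \<Rightarrow> real" where
  "hN c N x = 2 * gamN c N / (LN c N + betaN c N)
      * exp (betaN c N * (LN c N - x)) * sin (gamN c N * (LN c N - x))"

definition SigmaN :: "real \<Rightarrow> nat \<Rightarrow> real \<Rightarrow> real" where
  "SigmaN c N z = sqrt (integral {0..z} (\<lambda>x. (hN c N x)\<^sup>2 * htilde c N x))"

definition AN :: "nat \<Rightarrow> real" where
  "AN N = 6 * ln (ln (real N)) - ln (ln (ln (real N)))"

end

theory Submission
  imports Defs "HOL-Real_Asymp.Real_Asymp"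
begin


definition MM :: "real \<Rightarrow> real" where "MM t = (pi - t) / sin t"

lemma MM_strict:
  assumes "0 < s" "s < t" "t \<le> pi/2"
  shows "MM t < MM s"
proof -
  have ss: "0 < sin s" using assms by (intro sin_gt_zero) auto
  have st: "sin s < sin t" using assms by (subst sin_mono_less_eq) auto
  have "(pi - t) / sin t < (pi - s) / sin t"
    using assms ss st by (intro divide_strict_right_mono) auto
  also have "\<dots> \<le> (pi - s) / sin s"
    using assms ss st by (intro divide_left_mono) auto
  finally show ?thesis unfolding MM_def .
qed

lemma Lb_arccos:
  assumes "0 < b" "b < 1"
  shows "Lb b = MM (arccos b)" "0 < arccos b" "arccos b < pi/2"
proof -
  have s: "sin (arccos b) = gam b" unfolding gam_def using assms by (simp add: sin_arccos)
  have c: "cos (arccos b) = b" using assms by simp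
  show a1: "0 < arccos b" using arccos_lt_bounded[of b] assms by auto
  have "arccos b < arccos 0" using assms by (intro arccos_less_arccos) auto
  then show a2: "arccos b < pi/2" by simp
  have "gam b / b = tan (arccos b)" using s c by (simp add: tan_def)
  then have "arctan (gam b / b) = arccos b" using a1 a2 by (simp add: arctan_tan)
  then show "Lb b = MM (arccos b)" unfolding Lb_def MM_def using s by simp
qed

lemma Lb_strict:
  assumes "0 < b1" "b1 < b2" "b2 < 1"
  shows "Lb b1 < Lb b2"
proof -
  have "arccos b2 < arccos b1" using assms by (intro arccos_less_arccos) auto
  moreover have "0 < arccos b2" "arccos b1 < pi/2" using Lb_arccos[of b1] Lb_arccos[of b2] assms by auto
  ultimately have "MM (arccos b1) < MM (arccos b2)" by (intro MM_strict) auto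
  then show ?thesis using Lb_arccos(1)[of b1] Lb_arccos(1)[of b2] assms by simp
qed

lemma MM_exists:
  assumes "T > pi/2"
  shows "\<exists>t. 0 < t \<and> t < pi/2 \<and> MM t = T"
proof -
  define t1 where "t1 = pi / (2*(T+1))"
  have T0: "T > 0" using assms pi_gt_zero by linarith
  have t1p: "0 < t1" unfolding t1_def using T0 by simp
  have t1l: "t1 < pi/2" unfolding t1_def using T0 by (simp add: field_simps)
  have s1: "0 < sin t1" using t1p t1l by (intro sin_gt_zero) auto
  have "sin t1 \<le> t1" using t1p by (intro sin_x_le_x) auto
  then have q1: "(pi - t1) / t1 \<le> (pi - t1) / sin t1"
    using s1 t1l by (intro divide_left_mono) auto
  have q2: "pi / t1 = 2*(T+1)" unfolding t1_def using T0 by (simp add: field_simps)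
  have q3: "(pi - t1) / t1 = pi / t1 - 1" using t1p by (simp only: diff_divide_distrib) simp
  have "T \<le> (pi - t1) / t1" unfolding q3 q2 using T0 by simp
  then have m1: "T \<le> MM t1" unfolding MM_def using q1 by (rule order_trans)
  have m2: "MM (pi/2) \<le> T" unfolding MM_def using assms by simp
  have sne: "sin x \<noteq> 0" if "x \<in> {t1..pi/2}" for x
  proof -
    have "0 < x" "x < pi" using that t1p pi_gt_zero by auto
    then show ?thesis using sin_gt_zero[of x] by simp
  qed
  have cont: "continuous_on {t1..pi/2} MM" unfolding MM_def
    by (intro continuous_intros) (use sne in auto)
  obtain t where t: "t1 \<le> t" "t \<le> pi/2" "MM t = T"
    using IVT2'[OF m2 m1 _ cont] t1l by auto
  have "t \<noteq> pi/2"
  proof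
    assume tt: "t = pi/2"
    have "MM t = pi/2" unfolding tt MM_def by simp
    with t assms show False by simp
  qed
  then have tl: "t < pi/2" using t(2) by linarith
  have tp: "0 < t" using t(1) t1p by linarith
  show ?thesis by (rule exI[of _ t]) (intro conjI tl tp t(3))
qed

lemma betaN_char:
  assumes "Ltarget c N > pi/2"
  defines "t \<equiv> arccos (betaN c N)"
  shows "0 < t" "t < pi/2" "betaN c N = cos t" "gamN c N = sin t"
        "LN c N = Ltarget c N" "MM t = Ltarget c N"
proof -
  obtain s where s: "0 < s" "s < pi/2" "MM s = Ltarget c N" using MM_exists[OF assms(1)] by blast
  have cs1: "0 < cos s" using s by (intro cos_gt_zero) auto
  have cs2: "cos s < 1" using s cos_monotone_0_pi[of 0 s] by (simp only: cos_zero)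
  note cs = cs1 cs2
  have acs: "arccos (cos s) = s" using s by (intro arccos_cos) auto
  have P: "0 < cos s \<and> cos s < 1 \<and> Lb (cos s) = Ltarget c N"
    using cs s Lb_arccos(1)[of "cos s"] acs by simp
  have U: "\<And>b. 0 < b \<and> b < 1 \<and> Lb b = Ltarget c N \<Longrightarrow> b = cos s"
  proof -
    fix b assume b: "0 < b \<and> b < 1 \<and> Lb b = Ltarget c N"
    show "b = cos s"
    proof (rule ccontr)
      assume "b \<noteq> cos s"
      then have "b < cos s \<or> cos s < b" by auto
      then show False using Lb_strict[of b "cos s"] Lb_strict[of "cos s" b] b P by auto
    qed
  qed
  have beq: "betaN c N = cos s" unfolding betaN_def
    by (rule the_equality[where P="\<lambda>b. 0 < b \<and> b < 1 \<and> Lb b = Ltarget c N", OF P U])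
  have teq: "t = s" unfolding t_def beq acs ..
  show "0 < t" using s(1) teq by simp
  show "t < pi/2" using s(2) teq by simp
  show "betaN c N = cos t" using beq teq by simp
  show "MM t = Ltarget c N" using s(3) teq by simp
  show "gamN c N = sin t" unfolding gamN_def gam_def beq teq
  proof -
    have "1 - (cos s)\<^sup>2 = (sin s)\<^sup>2" by (simp add: sin_squared_eq)
    moreover have "0 < sin s" using s by (intro sin_gt_zero) auto
    ultimately show "sqrt (1 - (cos s)\<^sup>2) = sin s" by (simp only: real_sqrt_abs)
  qed
  show "LN c N = Ltarget c N" unfolding LN_def beq using P by simp
qed


definition FF :: "real \<Rightarrow> real \<Rightarrow> real \<Rightarrow> real \<Rightarrow> real" where
  "FF b g k u = exp (b*u) * (b * sin (k*g*u) - k*g * cos (k*g*u)) / (b\<^sup>2 + k\<^sup>2*g\<^sup>2)"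

definition GG :: "real \<Rightarrow> real \<Rightarrow> real \<Rightarrow> real" where
  "GG b g u = (3 * FF b g 1 u - FF b g 3 u) / 4"

lemma sin3: "sin (3*(x::real)) = 3 * sin x - 4 * sin x ^ 3"
proof -
  have "sin (3*x) = sin (2*x + x)" by simp
  also have "\<dots> = sin (2*x) * cos x + cos (2*x) * sin x" by (rule sin_add)
  also have "\<dots> = 2 * sin x * cos x * cos x + (cos x ^ 2 - sin x ^ 2) * sin x"
    by (simp only: sin_double cos_double)
  also have "\<dots> = 2 * sin x * (cos x)\<^sup>2 + ((cos x)\<^sup>2 - (sin x)\<^sup>2) * sin x"
    by (simp add: power2_eq_square)
  also have "\<dots> = 2 * sin x * (1 - (sin x)\<^sup>2) + ((1 - (sin x)\<^sup>2) - (sin x)\<^sup>2) * sin x"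
    by (simp only: cos_squared_eq)
  also have "\<dots> = 3 * sin x - 4 * sin x ^ 3"
    by (simp add: power2_eq_square power3_eq_cube algebra_simps)
  finally show ?thesis .
qed

lemma DERIV_FF:
  assumes "b\<^sup>2 + k\<^sup>2*g\<^sup>2 \<noteq> 0"
  shows "(FF b g k has_real_derivative exp (b*u) * sin (k*g*u)) (at u)"
proof -
  have "((\<lambda>u. exp (b*u) * (b * sin (k*g*u) - k*g * cos (k*g*u)) / (b\<^sup>2 + k\<^sup>2*g\<^sup>2)) has_real_derivative
     (exp (b*u) * b * (b * sin (k*g*u) - k*g * cos (k*g*u)) + exp (b*u) * (b * (cos (k*g*u) * (k*g)) - k*g * (- sin (k*g*u) * (k*g)))) / (b\<^sup>2 + k\<^sup>2*g\<^sup>2)) (at u)"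
    using assms by (auto intro!: derivative_eq_intros)
  moreover have "(exp (b*u) * b * (b * sin (k*g*u) - k*g * cos (k*g*u)) + exp (b*u) * (b * (cos (k*g*u) * (k*g)) - k*g * (- sin (k*g*u) * (k*g))))
     = (exp (b*u) * sin (k*g*u)) * (b\<^sup>2 + k\<^sup>2*g\<^sup>2)"
    by (simp add: algebra_simps power2_eq_square)
  then have "(exp (b*u) * b * (b * sin (k*g*u) - k*g * cos (k*g*u)) + exp (b*u) * (b * (cos (k*g*u) * (k*g)) - k*g * (- sin (k*g*u) * (k*g)))) / (b\<^sup>2 + k\<^sup>2*g\<^sup>2)
     = exp (b*u) * sin (k*g*u)"
    by (metis assms nonzero_mult_div_cancel_right)
  ultimately show ?thesis unfolding FF_def[abs_def] by simp
qed

lemma DERIV_GG: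
  assumes "g \<noteq> 0"
  shows "(GG b g has_real_derivative exp (b*u) * sin (g*u) ^ 3) (at u)"
proof -
  have n1: "b\<^sup>2 + 1\<^sup>2*g\<^sup>2 \<noteq> 0" "b\<^sup>2 + 3\<^sup>2*g\<^sup>2 \<noteq> 0" using assms
    by (auto simp: add_nonneg_eq_0_iff)
  have "((\<lambda>u. (3 * FF b g 1 u - FF b g 3 u) / 4) has_real_derivative
     (3 * (exp (b*u) * sin (1*g*u)) - exp (b*u) * sin (3*g*u)) / 4) (at u)"
    by (intro DERIV_cdivide DERIV_diff DERIV_cmult DERIV_FF n1)
  moreover have "(3 * (exp (b*u) * sin (1*g*u)) - exp (b*u) * sin (3*g*u)) / 4 = exp (b*u) * sin (g*u) ^ 3"
  proof -
    have s3: "sin (3 * g * u) = 3 * sin (g * u) - 4 * sin (g * u) ^ 3" using sin3[of "g*u"] by (simp add: mult.assoc)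
    show ?thesis by (simp only: s3) (simp add: algebra_simps)
  qed
  ultimately show ?thesis unfolding GG_def[abs_def] by simp
qed

lemma int1:
  fixes b g L z :: real
  assumes "g \<noteq> 0" "0 \<le> z"
  shows "integral {0..z} (\<lambda>x. (2 * g / (L + b) * exp (b * (L - x)) * sin (g * (L - x)))\<^sup>2 *
             (exp (b * (x - L)) * sin (g * (L - x)) / g))
       = 4 * g / (L + b)\<^sup>2 * (GG b g L - GG b g (L - z))"
proof -
  define C where "C = 4 * g / (L + b)\<^sup>2"
  have eq: "(2 * g / (L + b) * exp (b * (L - x)) * sin (g * (L - x)))\<^sup>2 *
             (exp (b * (x - L)) * sin (g * (L - x)) / g) = C * (exp (b * (L - x)) * sin (g * (L - x)) ^ 3)" for x
  proof -
    define E where "E = exp (b * (L - x))"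
    define E' where "E' = exp (b * (x - L))"
    define s where "s = sin (g * (L - x))"
    have e: "E * E' = 1" unfolding E_def E'_def by (simp flip: exp_add add: algebra_simps)
    have g2: "(2 * g / (L + b))\<^sup>2 / g = C" unfolding C_def using assms(1)
      by (simp add: power_divide power2_eq_square)
    have "(2 * g / (L + b) * E * s)\<^sup>2 * (E' * s / g) = ((2 * g / (L + b))\<^sup>2 / g) * (E * s ^ 3) * (E * E')"
      by (simp add: power2_eq_square power3_eq_cube divide_inverse algebra_simps)
    also have "\<dots> = C * (E * s ^ 3)" by (simp add: e g2)
    finally show ?thesis unfolding E_def E'_def s_def .
  qed
  have d: "((\<lambda>x. - (C * GG b g (L - x))) has_real_derivative C * (exp (b * (L - x)) * sin (g * (L - x)) ^ 3)) (at x)" for x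
  proof -
    have "((\<lambda>x. GG b g (L - x)) has_real_derivative exp (b * (L - x)) * sin (g * (L - x)) ^ 3 * (0 - 1)) (at x)"
      by (rule DERIV_chain2[OF DERIV_GG[OF assms(1)]]) (auto intro!: derivative_eq_intros)
    then show ?thesis by (auto intro!: derivative_eq_intros)
  qed
  have "((\<lambda>x. C * (exp (b * (L - x)) * sin (g * (L - x)) ^ 3)) has_integral
         (- (C * GG b g (L - z))) - (- (C * GG b g (L - 0)))) {0..z}"
    using fundamental_theorem_of_calculus[OF assms(2), where f="\<lambda>x. - (C * GG b g (L - x))",
        OF has_field_derivative_at_within[OF d, unfolded has_real_derivative_iff_has_vector_derivative]] .
  from integral_unique[OF this] have I: "integral {0..z} (\<lambda>x. C * (exp (b * (L - x)) * sin (g * (L - x)) ^ 3))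
     = C * (GG b g L - GG b g (L - z))" by (simp add: algebra_simps)
  show ?thesis using I unfolding eq C_def .
qed

definition PSI :: "real \<Rightarrow> real \<Rightarrow> real \<Rightarrow> real \<Rightarrow> real" where
  "PSI b g L x = exp (- (b * (L - x))) * (b * sin (g * (L - x)) + g * cos (g * (L - x))) / (b\<^sup>2 + g\<^sup>2)"

lemma int2:
  fixes b g L A n :: real
  assumes "b\<^sup>2 + g\<^sup>2 \<noteq> 0" "0 \<le> A"
  shows "integral {0..A} (\<lambda>x. n * (exp (b * (x - L)) * sin (g * (L - x)) / g))
       = n / g * (PSI b g L A - PSI b g L 0)"
proof -
  have d: "(PSI b g L has_real_derivative exp (b * (x - L)) * sin (g * (L - x))) (at x)" for x
  proof -
    have "(PSI b g L has_real_derivative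
      (exp (- (b * (L - x))) * (- (b * (0 - 1))) * (b * sin (g * (L - x)) + g * cos (g * (L - x)))
       + exp (- (b * (L - x))) * (b * (cos (g * (L - x)) * (g * (0 - 1))) + g * (- sin (g * (L - x)) * (g * (0 - 1))))) / (b\<^sup>2 + g\<^sup>2)) (at x)"
      unfolding PSI_def[abs_def] using assms(1) by (auto intro!: derivative_eq_intros)
    moreover have "(exp (- (b * (L - x))) * (- (b * (0 - 1))) * (b * sin (g * (L - x)) + g * cos (g * (L - x)))
       + exp (- (b * (L - x))) * (b * (cos (g * (L - x)) * (g * (0 - 1))) + g * (- sin (g * (L - x)) * (g * (0 - 1)))))
       = (exp (b * (x - L)) * sin (g * (L - x))) * (b\<^sup>2 + g\<^sup>2)"
      by (simp add: algebra_simps power2_eq_square)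
    then have "(exp (- (b * (L - x))) * (- (b * (0 - 1))) * (b * sin (g * (L - x)) + g * cos (g * (L - x)))
       + exp (- (b * (L - x))) * (b * (cos (g * (L - x)) * (g * (0 - 1))) + g * (- sin (g * (L - x)) * (g * (0 - 1))))) / (b\<^sup>2 + g\<^sup>2)
       = exp (b * (x - L)) * sin (g * (L - x))"
      by (metis assms(1) nonzero_mult_div_cancel_right)
    ultimately show ?thesis by simp
  qed
  have d': "((\<lambda>x. n / g * PSI b g L x) has_real_derivative n / g * (exp (b * (x - L)) * sin (g * (L - x)))) (at x)" for x
    by (rule DERIV_cmult[OF d])
  have "((\<lambda>x. n / g * (exp (b * (x - L)) * sin (g * (L - x)))) has_integral
         n / g * PSI b g L A - n / g * PSI b g L 0) {0..A}"
    using fundamental_theorem_of_calculus[OF assms(2), where f="\<lambda>x. n / g * PSI b g L x",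
        OF has_field_derivative_at_within[OF d', unfolded has_real_derivative_iff_has_vector_derivative]] .
  moreover have "(\<lambda>x. n * (exp (b * (x - L)) * sin (g * (L - x)) / g)) = (\<lambda>x. n / g * (exp (b * (x - L)) * sin (g * (L - x))))"
    by (rule ext) simp
  ultimately show ?thesis by (metis integral_unique right_diff_distrib)
qed


definition PP :: "real \<Rightarrow> real" where
  "PP t = (6*cos t* sin t - (cos t* sin(3*t) + 3* sin t*cos(3*t))/(1+8*(sin t)^2))/4"

definition FT :: "real \<Rightarrow> real" where
  "FT t = 4*(pi-t)^4*PP t/(sin t)^3 * exp (-((1-cos t)*(pi-t)/sin t)) * ((pi-t)/(pi-t+cos t* sin t))^2"

lemma FT_lim: "(FT \<longlongrightarrow> 64*pi^4) (at_right 0)"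
  unfolding FT_def PP_def by real_asymp

lemma D_lim: "((\<lambda>t::real. (1-cos t)*(pi-t)/sin t) \<longlongrightarrow> 0) (at_right 0)"
  by real_asymp

lemma sinc_lim: "((\<lambda>y::real. sin y / y) \<longlongrightarrow> 1) (at_right 0)"
  by real_asymp

context fixes c :: real assumes c: "0 < c" begin
lemma R1: "filterlim (\<lambda>N::nat. c*ln (real N) + 6*ln(ln (real N))) at_top sequentially"
  using c by real_asymp
lemma R2: "((\<lambda>N::nat. ln (real N) / (c*ln (real N) + 6*ln(ln (real N)))) \<longlongrightarrow> inverse c) sequentially"
  using c by real_asymp
lemma R3: "((\<lambda>N::nat. (6*ln(ln (real N)) - ln(ln(ln (real N))))/ ln(ln (real N))) \<longlongrightarrow> 6) sequentially"
  by real_asymp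
lemma R4: "((\<lambda>N::nat. (6*ln(ln (real N)) - ln(ln(ln (real N))))/ (c*ln (real N) + 6*ln(ln (real N)))) \<longlongrightarrow> 0) sequentially"
  using c by real_asymp
lemma R5: "((\<lambda>N::nat. 12 * ln(ln (real N)) / (c*ln (real N) + 6*ln(ln (real N)))^2) \<longlongrightarrow> 0) sequentially"
  using c by real_asymp
lemma R6: "((\<lambda>N::nat. 12 / ((c*ln (real N) + 6*ln(ln (real N)))^2 * real N powr c)) \<longlongrightarrow> 0) sequentially"
  using c by real_asymp
lemma R7: "filterlim (\<lambda>N::nat. 6*ln(ln (real N)) - ln(ln(ln (real N)))) at_top sequentially"
  by real_asymp
lemma R8: "filterlim (\<lambda>N::nat. (c*ln (real N) + 6*ln(ln (real N))) - (6*ln(ln (real N)) - ln(ln(ln (real N))))) at_top sequentially"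
  using c by real_asymp
lemma R9: "filterlim (\<lambda>N::nat. ln(ln (real N))) at_top sequentially"
  by real_asymp
end


lemma sqrt_sq_abs: "(sqrt x)\<^sup>2 = \<bar>x\<bar>"
proof (cases "x \<ge> 0")
  case True then show ?thesis by simp
next
  case False
  then have "sqrt x = - sqrt (- x)" by (simp add: real_sqrt_minus)
  then show ?thesis using False by simp
qed

lemma GG_L:
  assumes "sin t * L = pi - t"
  shows "GG (cos t) (sin t) L = exp (cos t * L) * PP t"
proof -
  have a1: "1 * sin t * L = pi - t" using assms by simp
  have a3: "3 * sin t * L = 3 * pi - 3 * t" using assms by (simp add: algebra_simps)
  have s3: "sin (3 * pi - 3 * t) = sin (3 * t)" by (simp add: sin_diff)
  have c3: "cos (3 * pi - 3 * t) = - cos (3 * t)" by (simp add: cos_diff)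
  have d1: "(cos t)\<^sup>2 + 1\<^sup>2 * (sin t)\<^sup>2 = 1" by simp
  have d3: "(cos t)\<^sup>2 + 3\<^sup>2 * (sin t)\<^sup>2 = 1 + 8 * (sin t)\<^sup>2"
    using sin_cos_squared_add[of t] by simp
  have F1: "FF (cos t) (sin t) 1 L = exp (cos t * L) * (2 * cos t * sin t)"
    unfolding FF_def a1 d1 by simp
  have F3: "FF (cos t) (sin t) 3 L = exp (cos t * L) * (cos t * sin (3 * t) + 3 * sin t * cos (3 * t)) / (1 + 8 * (sin t)\<^sup>2)"
    unfolding FF_def a3 d3 s3 c3 by simp
  show ?thesis unfolding GG_def F1 F3 PP_def
    by (simp add: algebra_simps)
qed

lemma FF_bound:
  assumes "b\<^sup>2 + g\<^sup>2 = 1" "1 \<le> k"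
  shows "\<bar>FF b g k u\<bar> \<le> (1 + k) * exp (b*u)"
proof -
  have "b\<^sup>2 \<le> 1" "g\<^sup>2 \<le> 1" using assms(1) zero_le_power2[of g] zero_le_power2[of b] by linarith+
  then have bb: "\<bar>b\<bar> \<le> 1" "\<bar>g\<bar> \<le> 1" by (simp_all only: abs_square_le_1)
  have n1: "\<bar>b * sin (k*g*u)\<bar> \<le> 1"
    using bb abs_sin_le_one[of "k*g*u"] by (simp add: abs_mult mult_le_one)
  have n2: "\<bar>k * g * cos (k*g*u)\<bar> \<le> k"
  proof -
    have "\<bar>g\<bar> * \<bar>cos (k*g*u)\<bar> \<le> 1" using bb abs_cos_le_one[of "k*g*u"] by (intro mult_le_one) auto
    then have "k * (\<bar>g\<bar> * \<bar>cos (k*g*u)\<bar>) \<le> k * 1" using assms(2) by (intro mult_left_mono) auto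
    moreover have "\<bar>k * g * cos (k*g*u)\<bar> = k * (\<bar>g\<bar> * \<bar>cos (k*g*u)\<bar>)" using assms(2) by (simp add: abs_mult)
    ultimately show ?thesis by simp
  qed
  have num: "\<bar>b * sin (k*g*u) - k*g * cos (k*g*u)\<bar> \<le> 1 + k" using n1 n2 by linarith
  have "1 \<le> k\<^sup>2" using assms(2) by (simp add: one_le_power)
  then have "g\<^sup>2 \<le> k\<^sup>2 * g\<^sup>2" by (simp add: mult_right_mono[of 1 "k^2" "g^2", simplified])
  then have D: "1 \<le> b\<^sup>2 + k\<^sup>2*g\<^sup>2" using assms(1) by linarith
  have "\<bar>FF b g k u\<bar> = exp (b*u) * \<bar>b * sin (k*g*u) - k*g * cos (k*g*u)\<bar> / (b\<^sup>2 + k\<^sup>2*g\<^sup>2)"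
    unfolding FF_def using D by (simp add: abs_mult abs_divide)
  also have "\<dots> \<le> exp (b*u) * \<bar>b * sin (k*g*u) - k*g * cos (k*g*u)\<bar> / 1"
    using D by (intro divide_left_mono) auto
  also have "\<dots> \<le> (1 + k) * exp (b*u)" using num by (simp add: mult.commute)
  finally show ?thesis .
qed

lemma GG_bound:
  assumes "b\<^sup>2 + g\<^sup>2 = 1"
  shows "\<bar>GG b g u\<bar> \<le> 3 * exp (b*u)"
proof -
  have "\<bar>GG b g u\<bar> \<le> (3 * \<bar>FF b g 1 u\<bar> + \<bar>FF b g 3 u\<bar>) / 4" unfolding GG_def by simp
  also have "\<dots> \<le> (3 * (2 * exp (b*u)) + 4 * exp (b*u)) / 4"
    using FF_bound[OF assms, of 1 u] FF_bound[OF assms, of 3 u] by simp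
  also have "\<dots> \<le> 3 * exp (b*u)" by simp
  finally show ?thesis .
qed

lemma PSI_0:
  assumes "sin t * L = pi - t"
  shows "PSI (cos t) (sin t) L 0 = 0"
proof -
  have e: "sin t * (L - 0) = pi - t" using assms by simp
  show ?thesis unfolding PSI_def e by simp
qed

lemma PSI_A:
  assumes "sin t * L = pi - t"
  shows "PSI (cos t) (sin t) L A = exp (- (cos t * (L - A))) * sin (sin t * A)"
proof -
  have e: "sin t * (L - A) = pi - (t + sin t * A)" using assms by (simp add: algebra_simps)
  have "cos t * sin (t + sin t * A) - sin t * cos (t + sin t * A) = sin ((t + sin t * A) - t)"
    by (simp only: sin_diff) (simp add: algebra_simps)
  then show ?thesis unfolding PSI_def e by simp
qed


definition EV :: "real \<Rightarrow> nat \<Rightarrow> bool" where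
  "EV c N \<longleftrightarrow> 1 < ln (real N) \<and> pi/2 < Ltarget c N \<and> 0 < AN N \<and> AN N < Ltarget c N"

definition RR :: "real \<Rightarrow> nat \<Rightarrow> real \<Rightarrow> real" where
  "RR c N z = 4 * gamN c N / (LN c N + betaN c N)\<^sup>2 * GG (betaN c N) (gamN c N) (LN c N - z) / real N powr c"

definition Dfun :: "real \<Rightarrow> real" where "Dfun t = (1 - cos t) * (pi - t) / sin t"

lemma EV_basic:
  assumes "EV c N"
  shows "0 < real N" "0 < ln (real N)" "0 < ln (ln (real N))" "0 < real N powr c"
        "exp (Ltarget c N) = real N powr c * (ln (real N))^6"
        "exp (Ltarget c N - AN N) = real N powr c * ln (ln (real N))"
proof -
  have l1: "1 < ln (real N)" using assms by (simp add: EV_def)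
  show l0: "0 < ln (real N)" using l1 by simp
  show n0: "0 < real N"
  proof (rule ccontr)
    assume "\<not> 0 < real N"
    then have "real N = 0" by simp
    then show False using l0 by simp
  qed
  show ll: "0 < ln (ln (real N))" using l1 by simp
  show "0 < real N powr c" using n0 by simp
  have e1: "exp (c * ln (real N)) = real N powr c" using n0 by (simp add: powr_def)
  have e2: "exp (6 * ln (ln (real N))) = (ln (real N))^6"
  proof -
    have "6 * ln (ln (real N)) = ln ((ln (real N))^6)" by (simp add: ln_realpow)
    then show ?thesis using l0 by simp
  qed
  show "exp (Ltarget c N) = real N powr c * (ln (real N))^6"
    unfolding Ltarget_def exp_add e1 e2 ..
  have "Ltarget c N - AN N = c * ln (real N) + ln (ln (ln (real N)))"
    unfolding Ltarget_def AN_def by simp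
  then show "exp (Ltarget c N - AN N) = real N powr c * ln (ln (real N))"
    using ll by (simp add: exp_add e1)
qed

lemma EV_theta:
  assumes "EV c N"
  defines "t \<equiv> arccos (betaN c N)"
  shows "0 < t" "t < pi/2" "betaN c N = cos t" "gamN c N = sin t" "LN c N = Ltarget c N"
        "sin t * Ltarget c N = pi - t" "0 < sin t" "sin t \<le> pi / Ltarget c N"
proof -
  have T: "pi/2 < Ltarget c N" using assms by (simp add: EV_def)
  note bc = betaN_char[OF T]
  show t0: "0 < t" "t < pi/2" "betaN c N = cos t" "gamN c N = sin t" "LN c N = Ltarget c N"
    using bc unfolding t_def by auto
  show s0: "0 < sin t" using t0 by (intro sin_gt_zero) auto
  have "MM t = Ltarget c N" using bc unfolding t_def by auto
  then show st: "sin t * Ltarget c N = pi - t" unfolding MM_def using s0 by (simp add: field_simps)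
  have Tp: "0 < Ltarget c N" using T pi_gt_zero by linarith
  have "sin t * Ltarget c N \<le> pi" using st t0 by linarith
  then show "sin t \<le> pi / Ltarget c N" using Tp by (simp add: field_simps)
qed


lemma alg_main:
  fixes s co T p ET nc l t :: real
  assumes "0 < s" "0 < T" "0 < co" "s * T = pi - t" "ET = exp T" "ET = nc * l^6" "0 < nc" "0 < l"
  shows "4 * s / (T + co)\<^sup>2 * (exp (co * T) * p) / nc
       = 4*(pi-t)^4*p/s^3 * exp (-((1-co)*(pi-t)/s)) * ((pi-t)/(pi-t+co * s))^2 * (l/T)^6"
proof -
  have pt: "pi - t = s * T" using assms by simp
  have e1: "(1-co)*(s*T)/s = T - co * T" using assms by (simp add: field_simps)
  have e2: "exp (-(T - co * T)) = exp (co * T) / ET" using assms by (simp add: exp_diff[symmetric])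
  have e3': "s*T+co * s = s * (T + co)" by (simp add: algebra_simps)
  have e3: "(s*T)/(s*T+co * s) = T / (T + co)" unfolding e3' using assms(1) by simp
  have "4*(pi-t)^4*p/s^3 * exp (-((1-co)*(pi-t)/s)) * ((pi-t)/(pi-t+co * s))^2 * (l/T)^6
     = 4*(s*T)^4*p/s^3 * (exp (co * T) / (nc * l^6)) * (T / (T + co))^2 * (l/T)^6"
    unfolding pt e1 e2 e3 assms(6) ..
  also have "\<dots> = 4 * s / (T + co)\<^sup>2 * (exp (co * T) * p) / nc"
  proof -
    have "T + co \<noteq> 0" using assms(2,3) by simp
    then show ?thesis using assms(1,2,3,7,8) by (simp add: divide_simps power_divide) algebra
  qed
  finally show ?thesis by simp
qed

lemma absdiv: "0 < (d::real) \<Longrightarrow> \<bar>a - b\<bar> / d = \<bar>a / d - b / d\<bar>"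
  by (simp add: diff_divide_distrib[symmetric])

lemma PW_sig:
  assumes "EV c N" "0 \<le> z"
  shows "(SigmaN c N z)\<^sup>2 / real N powr c
       = \<bar>FT (arccos (betaN c N)) * (ln (real N) / Ltarget c N)^6 - RR c N z\<bar>"
proof -
  define t where "t = arccos (betaN c N)"
  note th = EV_theta[OF assms(1), folded t_def]
  note bs = EV_basic[OF assms(1)]
  have g0: "gamN c N \<noteq> 0" using th by simp
  have "(SigmaN c N z)\<^sup>2 = \<bar>4 * gamN c N / (LN c N + betaN c N)\<^sup>2 *
        GG (betaN c N) (gamN c N) (LN c N) - 4 * gamN c N / (LN c N + betaN c N)\<^sup>2 * GG (betaN c N) (gamN c N) (LN c N - z)\<bar>"
    unfolding SigmaN_def sqrt_sq_abs hN_def htilde_def using int1[OF g0 assms(2)] by (simp add: right_diff_distrib)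
  then have "(SigmaN c N z)\<^sup>2 / real N powr c = \<bar>4 * gamN c N / (LN c N + betaN c N)\<^sup>2 *
        GG (betaN c N) (gamN c N) (LN c N) / real N powr c - RR c N z\<bar>"
    unfolding RR_def using absdiv[OF bs(4)] by simp
  also have "4 * gamN c N / (LN c N + betaN c N)\<^sup>2 * GG (betaN c N) (gamN c N) (LN c N) / real N powr c
      = FT t * (ln (real N) / Ltarget c N)^6"
  proof -
    have T0: "0 < Ltarget c N" using assms(1) pi_gt_zero unfolding EV_def by linarith
    have c0: "0 < cos t" using th by (intro cos_gt_zero) auto
    have "GG (cos t) (sin t) (Ltarget c N) = exp (cos t * Ltarget c N) * PP t"
      using GG_L th(6) by blast
    then show ?thesis unfolding th(3,4,5) FT_def
      using alg_main[OF th(7) T0 c0 th(6) refl bs(5) bs(4) bs(2), of "PP t"] by simp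
  qed
  finally show ?thesis unfolding t_def .
qed

lemma PW_R:
  assumes "EV c N" "0 \<le> z" "z \<le> Ltarget c N"
  shows "\<bar>RR c N z\<bar> \<le> 12 * exp (Ltarget c N - z) / ((Ltarget c N)\<^sup>2 * real N powr c)"
proof -
  define t where "t = arccos (betaN c N)"
  note th = EV_theta[OF assms(1), folded t_def]
  note bs = EV_basic[OF assms(1)]
  define T where "T = Ltarget c N"
  have T0: "0 < T" using assms(1) pi_gt_zero unfolding EV_def T_def by linarith
  have c0: "0 < cos t" using th by (intro cos_gt_zero) auto
  have c1: "cos t \<le> 1" by simp
  have s1: "sin t \<le> 1" by simp
  have G: "\<bar>GG (cos t) (sin t) (T - z)\<bar> \<le> 3 * exp (cos t * (T - z))"
    by (rule GG_bound) simp
  have "exp (cos t * (T - z)) \<le> exp (T - z)"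
  proof -
    have "cos t * (T - z) \<le> T - z" using assms(3) c0 c1 unfolding T_def by (intro mult_left_le_one_le) auto
    then show ?thesis by simp
  qed
  then have G': "\<bar>GG (cos t) (sin t) (T - z)\<bar> \<le> 3 * exp (T - z)" using G by linarith
  have q: "4 * sin t / (T + cos t)\<^sup>2 \<le> 4 / T\<^sup>2"
  proof -
    have "T\<^sup>2 \<le> (T + cos t)\<^sup>2" using T0 c0 by (intro power_mono) auto
    then have "4 * sin t / (T + cos t)\<^sup>2 \<le> 4 * 1 / T\<^sup>2"
      using th(7) s1 T0 c0 by (intro frac_le) auto
    then show ?thesis by simp
  qed
  have "\<bar>RR c N z\<bar> = 4 * sin t / (T + cos t)\<^sup>2 * \<bar>GG (cos t) (sin t) (T - z)\<bar> / real N powr c"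
    unfolding RR_def th(3,4,5) T_def[symmetric] using th(7) bs(4) by (simp add: abs_mult abs_divide)
  also have "\<dots> \<le> 4 / T\<^sup>2 * (3 * exp (T - z)) / real N powr c"
    using q G' th(7) bs(4) T0 by (intro divide_right_mono mult_mono) auto
  also have "\<dots> = 12 * exp (T - z) / (T\<^sup>2 * real N powr c)" by simp
  finally show ?thesis unfolding T_def .
qed


lemma alg3:
  fixes s T t A n nc ll co E S :: real
  assumes "0 < s" "s * T = pi - t" "0 < T" "0 < A" "0 < n" "0 < nc" "0 < ll" "exp (T - A) = nc * ll"
  shows "n / s * (exp (-(co * (T - A))) * sin (s * A)) / (n / nc)
       = exp ((1 - co) * (pi - t) / s * (1 - A / T)) * (sin ((pi - t) * (A / T)) / ((pi - t) * (A / T))) * (A / ll)"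
proof -
  have pt: "pi - t = s * T" using assms by simp
  have e1: "(1 - co) * (s * T) / s * (1 - A / T) = (T - A) + (-(co * (T - A)))"
    using assms(1,3) by (simp add: field_simps)
  have e2: "s * T * (A / T) = s * A" using assms(3) by simp
  have "exp ((1 - co) * (pi - t) / s * (1 - A / T)) * (sin ((pi - t) * (A / T)) / ((pi - t) * (A / T))) * (A / ll)
      = nc * ll * exp (-(co * (T - A))) * (sin (s * A) / (s * A)) * (A / ll)"
    unfolding pt e1 e2 exp_add assms(8) ..
  also have "\<dots> = n / s * (exp (-(co * (T - A))) * sin (s * A)) / (n / nc)"
    using assms(1,4,5,6,7) by (simp add: divide_simps)
  finally show ?thesis by simp
qed

lemma PW_3:
  assumes "EV c N"
  defines "t \<equiv> arccos (betaN c N)"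
  shows "integral {0..AN N} (\<lambda>x. real N * htilde c N x) / real N powr (1 - c)
       = exp (Dfun t * (1 - AN N / Ltarget c N)) *
         (sin ((pi - t) * (AN N / Ltarget c N)) / ((pi - t) * (AN N / Ltarget c N))) * (AN N / ln (ln (real N)))"
proof -
  note th = EV_theta[OF assms(1), folded t_def]
  note bs = EV_basic[OF assms(1)]
  have T0: "0 < Ltarget c N" using assms(1) pi_gt_zero unfolding EV_def by linarith
  have A0: "0 < AN N" using assms(1) unfolding EV_def by simp
  have bg: "(cos t)\<^sup>2 + (sin t)\<^sup>2 = 1" by simp
  have "integral {0..AN N} (\<lambda>x. real N * htilde c N x)
      = real N / sin t * (PSI (cos t) (sin t) (Ltarget c N) (AN N) - PSI (cos t) (sin t) (Ltarget c N) 0)"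
    unfolding htilde_def th(3,4,5) by (rule int2) (use A0 in auto)
  also have "\<dots> = real N / sin t * (exp (-(cos t * (Ltarget c N - AN N))) * sin (sin t * AN N))"
    using PSI_A[OF th(6)] PSI_0[OF th(6)] by simp
  finally have I: "integral {0..AN N} (\<lambda>x. real N * htilde c N x)
      = real N / sin t * (exp (-(cos t * (Ltarget c N - AN N))) * sin (sin t * AN N))" .
  have P: "real N powr (1 - c) = real N / real N powr c"
    using bs(1) by (simp add: powr_diff)
  show ?thesis unfolding I P Dfun_def
    by (rule alg3[OF th(7) th(6) T0 A0 bs(1) bs(4) bs(3) bs(6)])
qed

lemma ev_EV:
  assumes c: "0 < c"
  shows "eventually (EV c) sequentially"
proof -
  have l_top: "filterlim (\<lambda>N::nat. ln (real N)) at_top sequentially" by real_asymp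
  have T_top: "filterlim (\<lambda>N. Ltarget c N) at_top sequentially"
    unfolding Ltarget_def by (rule R1[OF c])
  have A_top: "filterlim (\<lambda>N. AN N) at_top sequentially"
    unfolding AN_def by (rule R7[OF c])
  have TA_top: "filterlim (\<lambda>N. Ltarget c N - AN N) at_top sequentially"
    unfolding AN_def Ltarget_def by (rule R8[OF c])
  have e1: "eventually (\<lambda>N. 1 < ln (real N)) sequentially"
    by (rule eventually_compose_filterlim[OF eventually_gt_at_top l_top])
  have e2: "eventually (\<lambda>N. pi/2 < Ltarget c N) sequentially"
    by (rule eventually_compose_filterlim[OF eventually_gt_at_top T_top])
  have e3: "eventually (\<lambda>N. 0 < AN N) sequentially"
    by (rule eventually_compose_filterlim[OF eventually_gt_at_top A_top])
  have e4: "eventually (\<lambda>N. 0 < Ltarget c N - AN N) sequentially"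
    by (rule eventually_compose_filterlim[OF eventually_gt_at_top TA_top])
  show ?thesis using e1 e2 e3 e4 by eventually_elim (auto simp: EV_def)
qed

lemma theta_lim:
  assumes c: "0 < c"
  shows "filterlim (\<lambda>N. arccos (betaN c N)) (at_right 0) sequentially"
proof -
  have T_top: "filterlim (\<lambda>N. Ltarget c N) at_top sequentially"
    unfolding Ltarget_def by (rule R1[OF c])
  have ev: "eventually (EV c) sequentially" by (rule ev_EV[OF c])
  have pT: "((\<lambda>N. pi / Ltarget c N) \<longlongrightarrow> 0) sequentially"
    by (rule tendsto_divide_0[OF tendsto_const filterlim_at_top_imp_at_infinity[OF T_top]])
  have s0: "((\<lambda>N. sin (arccos (betaN c N))) \<longlongrightarrow> 0) sequentially"
  proof (rule tendsto_sandwich[OF _ _ tendsto_const pT])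
    show "eventually (\<lambda>N. 0 \<le> sin (arccos (betaN c N))) sequentially"
      using ev by eventually_elim (rule less_imp_le[OF EV_theta(7)])
    show "eventually (\<lambda>N. sin (arccos (betaN c N)) \<le> pi / Ltarget c N) sequentially"
      using ev by eventually_elim (rule EV_theta(8))
  qed
  have "((\<lambda>N. arcsin (sin (arccos (betaN c N)))) \<longlongrightarrow> arcsin 0) sequentially"
    by (rule isCont_tendsto_compose[OF isCont_arcsin s0]) auto
  then have a0: "((\<lambda>N. arcsin (sin (arccos (betaN c N)))) \<longlongrightarrow> 0) sequentially" by simp
  have "eventually (\<lambda>N. arcsin (sin (arccos (betaN c N))) = arccos (betaN c N)) sequentially"
  proof (rule eventually_mono[OF ev])
    fix N assume e: "EV c N"
    show "arcsin (sin (arccos (betaN c N))) = arccos (betaN c N)"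
      using EV_theta(1,2)[OF e] by (intro arcsin_sin) auto
  qed
  then have "((\<lambda>N. arccos (betaN c N)) \<longlongrightarrow> 0) sequentially"
    using a0 by (rule Lim_transform_eventually[rotated])
  moreover have "eventually (\<lambda>N. 0 < arccos (betaN c N)) sequentially"
    using ev by eventually_elim (rule EV_theta(1))
  ultimately show ?thesis by (rule tendsto_imp_filterlim_at_right)
qed


theorem proposition1p1:
  fixes c :: real
  assumes "0 < c" "c < 1"
  shows "\<exists>\<sigma> > 0. \<exists>a > 0.
    ((\<lambda>N. (SigmaN c N (LN c N))\<^sup>2 / real N powr c) \<longlonglongrightarrow> \<sigma>\<^sup>2) \<and>
    ((\<lambda>N. (SigmaN c N (AN N))\<^sup>2 / real N powr c) \<longlonglongrightarrow> \<sigma>\<^sup>2) \<and>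
    ((\<lambda>N. integral {0..AN N} (\<lambda>x. real N * htilde c N x) / real N powr (1 - c)) \<longlonglongrightarrow> a)"
proof -
  have c: "0 < c" using assms(1) .
  define \<sigma> where "\<sigma> = 8 * pi\<^sup>2 / c ^ 3"
  have \<sigma>0: "0 < \<sigma>" unfolding \<sigma>_def using c by simp
  have \<sigma>2: "\<sigma>\<^sup>2 = 64 * pi ^ 4 * inverse c ^ 6"
    unfolding \<sigma>_def by (simp add: power_divide power_inverse field_simps)
  have ev: "eventually (EV c) sequentially" by (rule ev_EV[OF c])
  have th: "filterlim (\<lambda>N. arccos (betaN c N)) (at_right 0) sequentially" by (rule theta_lim[OF c])
  have FTl: "((\<lambda>N. FT (arccos (betaN c N))) \<longlongrightarrow> 64 * pi ^ 4) sequentially"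
    by (rule filterlim_compose[OF FT_lim th])
  have rl: "((\<lambda>N. (ln (real N) / Ltarget c N) ^ 6) \<longlongrightarrow> inverse c ^ 6) sequentially"
    unfolding Ltarget_def by (rule tendsto_power[OF R2[OF c]])
  have Ml: "((\<lambda>N. FT (arccos (betaN c N)) * (ln (real N) / Ltarget c N) ^ 6) \<longlongrightarrow> \<sigma>\<^sup>2) sequentially"
    unfolding \<sigma>2 using tendsto_mult[OF FTl rl] by simp
  have R1l: "((\<lambda>N. RR c N (LN c N)) \<longlongrightarrow> 0) sequentially"
  proof (rule Lim_null_comparison)
    show "eventually (\<lambda>N. norm (RR c N (LN c N)) \<le> 12 / ((Ltarget c N)\<^sup>2 * real N powr c)) sequentially"
    proof (rule eventually_mono[OF ev])
      fix N assume e: "EV c N"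
      have T0: "0 < Ltarget c N" using e pi_gt_zero unfolding EV_def by linarith
      show "norm (RR c N (LN c N)) \<le> 12 / ((Ltarget c N)\<^sup>2 * real N powr c)"
        using PW_R[OF e, of "Ltarget c N"] T0 EV_theta(5)[OF e] by simp
    qed
    show "((\<lambda>N. 12 / ((Ltarget c N)\<^sup>2 * real N powr c)) \<longlongrightarrow> 0) sequentially"
      unfolding Ltarget_def by (rule R6[OF c])
  qed
  have L1: "((\<lambda>N. (SigmaN c N (LN c N))\<^sup>2 / real N powr c) \<longlongrightarrow> \<sigma>\<^sup>2) sequentially"
  proof -
    have "((\<lambda>N. \<bar>FT (arccos (betaN c N)) * (ln (real N) / Ltarget c N) ^ 6 - RR c N (LN c N)\<bar>) \<longlongrightarrow> \<bar>\<sigma>\<^sup>2 - 0\<bar>) sequentially"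
      by (intro tendsto_rabs tendsto_diff Ml R1l)
    then have *: "((\<lambda>N. \<bar>FT (arccos (betaN c N)) * (ln (real N) / Ltarget c N) ^ 6 - RR c N (LN c N)\<bar>) \<longlongrightarrow> \<sigma>\<^sup>2) sequentially"
      by simp
    have "eventually (\<lambda>N. \<bar>FT (arccos (betaN c N)) * (ln (real N) / Ltarget c N) ^ 6 - RR c N (LN c N)\<bar>
        = (SigmaN c N (LN c N))\<^sup>2 / real N powr c) sequentially"
    proof (rule eventually_mono[OF ev])
      fix N assume e: "EV c N"
      have T0: "0 < Ltarget c N" using e pi_gt_zero unfolding EV_def by linarith
      show "\<bar>FT (arccos (betaN c N)) * (ln (real N) / Ltarget c N) ^ 6 - RR c N (LN c N)\<bar>
        = (SigmaN c N (LN c N))\<^sup>2 / real N powr c"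
        using PW_sig[OF e, of "LN c N"] T0 EV_theta(5)[OF e] by simp
    qed
    then show ?thesis using * by (rule Lim_transform_eventually[rotated])
  qed
  have R2l: "((\<lambda>N. RR c N (AN N)) \<longlongrightarrow> 0) sequentially"
  proof (rule Lim_null_comparison)
    show "eventually (\<lambda>N. norm (RR c N (AN N)) \<le> 12 * ln (ln (real N)) / (Ltarget c N)\<^sup>2) sequentially"
    proof (rule eventually_mono[OF ev])
      fix N assume e: "EV c N"
      have A: "0 \<le> AN N" "AN N \<le> Ltarget c N" using e unfolding EV_def by auto
      have "norm (RR c N (AN N)) \<le> 12 * exp (Ltarget c N - AN N) / ((Ltarget c N)\<^sup>2 * real N powr c)"
        using PW_R[OF e A] by simp
      also have "\<dots> = 12 * ln (ln (real N)) / (Ltarget c N)\<^sup>2"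
        using EV_basic(4,6)[OF e] by simp
      finally show "norm (RR c N (AN N)) \<le> 12 * ln (ln (real N)) / (Ltarget c N)\<^sup>2" .
    qed
    show "((\<lambda>N. 12 * ln (ln (real N)) / (Ltarget c N)\<^sup>2) \<longlongrightarrow> 0) sequentially"
      unfolding Ltarget_def by (rule R5[OF c])
  qed
  have L2: "((\<lambda>N. (SigmaN c N (AN N))\<^sup>2 / real N powr c) \<longlongrightarrow> \<sigma>\<^sup>2) sequentially"
  proof -
    have "((\<lambda>N. \<bar>FT (arccos (betaN c N)) * (ln (real N) / Ltarget c N) ^ 6 - RR c N (AN N)\<bar>) \<longlongrightarrow> \<bar>\<sigma>\<^sup>2 - 0\<bar>) sequentially"
      by (intro tendsto_rabs tendsto_diff Ml R2l)
    then have *: "((\<lambda>N. \<bar>FT (arccos (betaN c N)) * (ln (real N) / Ltarget c N) ^ 6 - RR c N (AN N)\<bar>) \<longlongrightarrow> \<sigma>\<^sup>2) sequentially"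
      by simp
    have "eventually (\<lambda>N. \<bar>FT (arccos (betaN c N)) * (ln (real N) / Ltarget c N) ^ 6 - RR c N (AN N)\<bar>
        = (SigmaN c N (AN N))\<^sup>2 / real N powr c) sequentially"
    proof (rule eventually_mono[OF ev])
      fix N assume e: "EV c N"
      have A: "0 \<le> AN N" using e unfolding EV_def by auto
      show "\<bar>FT (arccos (betaN c N)) * (ln (real N) / Ltarget c N) ^ 6 - RR c N (AN N)\<bar>
        = (SigmaN c N (AN N))\<^sup>2 / real N powr c"
        using PW_sig[OF e A] by simp
    qed
    then show ?thesis using * by (rule Lim_transform_eventually[rotated])
  qed
  have AT: "((\<lambda>N. AN N / Ltarget c N) \<longlongrightarrow> 0) sequentially"
    unfolding AN_def Ltarget_def by (rule R4[OF c])
  have Dl: "((\<lambda>N. Dfun (arccos (betaN c N))) \<longlongrightarrow> 0) sequentially"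
    unfolding Dfun_def by (rule filterlim_compose[OF D_lim th])
  have th0: "((\<lambda>N. arccos (betaN c N)) \<longlongrightarrow> 0) sequentially"
    using th by (rule filterlim_mono) (simp_all add: at_within_le_nhds)
  define y where "y N = (pi - arccos (betaN c N)) * (AN N / Ltarget c N)" for N
  have yl0: "(y \<longlongrightarrow> (pi - 0) * 0) sequentially"
    unfolding y_def by (intro tendsto_mult tendsto_diff tendsto_const th0 AT)
  have ypos: "eventually (\<lambda>N. 0 < y N) sequentially"
  proof (rule eventually_mono[OF ev])
    fix N assume e: "EV c N"
    have T0: "0 < Ltarget c N" using e pi_gt_zero unfolding EV_def by linarith
    have A0: "0 < AN N" using e unfolding EV_def by auto
    have "arccos (betaN c N) < pi/2" by (rule EV_theta(2)[OF e])
    then have "0 < pi - arccos (betaN c N)" using pi_gt_zero by linarith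
    then show "0 < y N" unfolding y_def using T0 A0 by simp
  qed
  have ylim: "filterlim y (at_right 0) sequentially"
    using yl0 ypos by (intro tendsto_imp_filterlim_at_right) auto
  have sl: "((\<lambda>N. sin (y N) / y N) \<longlongrightarrow> 1) sequentially"
    by (rule filterlim_compose[OF sinc_lim ylim])
  have el: "((\<lambda>N. exp (Dfun (arccos (betaN c N)) * (1 - AN N / Ltarget c N))) \<longlongrightarrow> exp (0 * (1 - 0))) sequentially"
    by (intro tendsto_exp tendsto_mult tendsto_diff tendsto_const Dl AT)
  have al: "((\<lambda>N. AN N / ln (ln (real N))) \<longlongrightarrow> 6) sequentially"
    unfolding AN_def by (rule R3[OF c])
  have "((\<lambda>N. exp (Dfun (arccos (betaN c N)) * (1 - AN N / Ltarget c N)) * (sin (y N) / y N) * (AN N / ln (ln (real N))))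
      \<longlongrightarrow> exp (0 * (1 - 0)) * 1 * 6) sequentially"
    by (intro tendsto_mult el sl al)
  then have *: "((\<lambda>N. exp (Dfun (arccos (betaN c N)) * (1 - AN N / Ltarget c N)) * (sin (y N) / y N) * (AN N / ln (ln (real N))))
      \<longlongrightarrow> 6) sequentially" by simp
  have "eventually (\<lambda>N. exp (Dfun (arccos (betaN c N)) * (1 - AN N / Ltarget c N)) * (sin (y N) / y N) * (AN N / ln (ln (real N)))
      = integral {0..AN N} (\<lambda>x. real N * htilde c N x) / real N powr (1 - c)) sequentially"
  proof (rule eventually_mono[OF ev])
    fix N assume e: "EV c N"
    show "exp (Dfun (arccos (betaN c N)) * (1 - AN N / Ltarget c N)) * (sin (y N) / y N) * (AN N / ln (ln (real N)))
      = integral {0..AN N} (\<lambda>x. real N * htilde c N x) / real N powr (1 - c)"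
      unfolding y_def PW_3[OF e] ..
  qed
  then have L3: "((\<lambda>N. integral {0..AN N} (\<lambda>x. real N * htilde c N x) / real N powr (1 - c)) \<longlongrightarrow> 6) sequentially"
    using * by (rule Lim_transform_eventually[rotated])
  show ?thesis
    by (rule exI[of _ \<sigma>], rule conjI[OF \<sigma>0], rule exI[of _ 6]) (use L1 L2 L3 in simp)
qed

end
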